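(* Let $d\ge1$, $k\ge2$, and let $G=(V,D)$ be an $\mathcal{R}_d$-connected $k$-fold $\mathcal{R}_d$-circuit whose set of technicolour vertices is $X=\{u,v\}$. (i) If $uv\in D$, then $G$ is the graphical parallel connection of $k$ $\mathcal{R}_d$-circuits along $uv$. (ii) If $uv\notin D$, then $G$ is obtained from the graphical parallel connection of $k+1$ $\mathcal{R}_d$-circuits along $uv$ by deleting $uv$.
   Context: For a graph $G=(V,E)$ and a generic $p:V\to\mathbb{R}^d$ (coordinates algebraically independent over $\mathbb{Q}$), the rigidity matrix has a row for each $uv\in E$ with $p(u)-p(v)$ in the $d$ columns of $u$, $p(v)-p(u)$ in those of $v$, zeros elsewhere; $\mathcal{R}_d$ is its row matroid, with rank $r_d$. A graph is $\mathcal{R}_d$-connected if the restriction of $\mathcal{R}_d$ to its edge set is a connected matroid (every two edges lie in a common circuit). A set of edges is cyclic if it is a union of $\mathcal{R}_d$-circuits. $(V,D)$ is a $k$-fold $\mathcal{R}_d$-circuit if $D$ is cyclic and $r_d(D)=|D|-k$. Its principal partition is the partition $\{A_1,\dots,A_\ell\}$ of $D$ such that $\{D\setminus A_i\}$ is exactly the set of $(k-1)$-fold $\mathcal{R}_d$-circuits contained in $D$. A vertex is technicolour if it is incident with edges from at least two parts of the principal partition. The graphical parallel connection of graphs $H_1,\dots,H_m$ along the edge $uv$ is their union, where each $H_i$ contains the edge $uv$ and $H_i\cap H_j$ consists exactly of the vertices $u,v$ and the edge $uv$ for $i\neq j$. *)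

theory Defs
  imports Complex_Main
begin

definition is_graph :: "'v set \<Rightarrow> 'v set set \<Rightarrow> bool" where
  "is_graph V E \<longleftrightarrow> finite V \<and> (\<forall>e\<in>E. \<exists>a b. a \<noteq> b \<and> a \<in> V \<and> b \<in> V \<and> e = {a, b})"

text \<open>A polynomial is given by its finitely supported coefficient function on monomials
  (exponent vectors m with finite support contained in I).\<close>
definition alg_indep_over_rat :: "'i set \<Rightarrow> ('i \<Rightarrow> real) \<Rightarrow> bool" where
  "alg_indep_over_rat I x \<longleftrightarrow>
     (\<forall>c :: ('i \<Rightarrow> nat) \<Rightarrow> rat.
        finite {m. c m \<noteq> 0} \<and>
        (\<forall>m. c m \<noteq> 0 \<longrightarrow> finite {i. m i \<noteq> 0} \<and> {i. m i \<noteq> 0} \<subseteq> I) \<and>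
        (\<exists>m. c m \<noteq> 0)
        \<longrightarrow> (\<Sum>m | c m \<noteq> 0. of_rat (c m) * (\<Prod>i | m i \<noteq> 0. x i ^ m i)) \<noteq> 0)"

text \<open>p : V \<rightarrow> R^d (coordinate i < d of p w is p w i) is generic.\<close>
definition generic :: "nat \<Rightarrow> 'v set \<Rightarrow> ('v \<Rightarrow> nat \<Rightarrow> real) \<Rightarrow> bool" where
  "generic d V p \<longleftrightarrow> alg_indep_over_rat (V \<times> {..<d}) (\<lambda>(w, i). p w i)"

text \<open>Row of the rigidity matrix for the edge e = {a,b}; columns are indexed by
  pairs (w, i) with w a vertex and i < d. In the columns of a it equals p(a) - p(b),
  in those of b it equals p(b) - p(a), zero elsewhere.\<close>
definition rig_row :: "nat \<Rightarrow> ('v \<Rightarrow> nat \<Rightarrow> real) \<Rightarrow> 'v set \<Rightarrow> 'v \<times> nat \<Rightarrow> real" where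
  "rig_row d p e = (\<lambda>(w, i). if w \<in> e \<and> i < d then (\<Sum>x\<in>e. p w i - p x i) else 0)"

definition rig_indep :: "nat \<Rightarrow> ('v \<Rightarrow> nat \<Rightarrow> real) \<Rightarrow> 'v set set \<Rightarrow> bool" where
  "rig_indep d p F \<longleftrightarrow> finite F \<and>
     (\<forall>c :: 'v set \<Rightarrow> real. (\<forall>col. (\<Sum>e\<in>F. c e * rig_row d p e col) = 0)
        \<longrightarrow> (\<forall>e\<in>F. c e = 0))"

definition rig_rank :: "nat \<Rightarrow> ('v \<Rightarrow> nat \<Rightarrow> real) \<Rightarrow> 'v set set \<Rightarrow> nat" where
  "rig_rank d p F = Max (card ` {I. I \<subseteq> F \<and> rig_indep d p I})"

definition rig_circuit :: "nat \<Rightarrow> ('v \<Rightarrow> nat \<Rightarrow> real) \<Rightarrow> 'v set set \<Rightarrow> bool" where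
  "rig_circuit d p C \<longleftrightarrow> finite C \<and> \<not> rig_indep d p C \<and> (\<forall>C'. C' \<subset> C \<longrightarrow> rig_indep d p C')"

definition rig_cyclic :: "nat \<Rightarrow> ('v \<Rightarrow> nat \<Rightarrow> real) \<Rightarrow> 'v set set \<Rightarrow> bool" where
  "rig_cyclic d p D \<longleftrightarrow> D = \<Union>{C. C \<subseteq> D \<and> rig_circuit d p C}"

definition kfold_circuit :: "nat \<Rightarrow> ('v \<Rightarrow> nat \<Rightarrow> real) \<Rightarrow> nat \<Rightarrow> 'v set set \<Rightarrow> bool" where
  "kfold_circuit d p k D \<longleftrightarrow> finite D \<and> rig_cyclic d p D \<and> rig_rank d p D + k = card D"

definition rig_connected :: "nat \<Rightarrow> ('v \<Rightarrow> nat \<Rightarrow> real) \<Rightarrow> 'v set set \<Rightarrow> bool" where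
  "rig_connected d p D \<longleftrightarrow>
     (\<forall>e\<in>D. \<forall>f\<in>D. e \<noteq> f \<longrightarrow> (\<exists>C. C \<subseteq> D \<and> rig_circuit d p C \<and> e \<in> C \<and> f \<in> C))"

definition principal_partition ::
  "nat \<Rightarrow> ('v \<Rightarrow> nat \<Rightarrow> real) \<Rightarrow> nat \<Rightarrow> 'v set set \<Rightarrow> 'v set set set \<Rightarrow> bool" where
  "principal_partition d p k D P \<longleftrightarrow>
     \<Union>P = D \<and> {} \<notin> P \<and> (\<forall>A\<in>P. \<forall>B\<in>P. A \<noteq> B \<longrightarrow> A \<inter> B = {}) \<and>
     (\<lambda>A. D - A) ` P = {D'. D' \<subseteq> D \<and> kfold_circuit d p (k - 1) D'}"

definition technicolour :: "'v set set set \<Rightarrow> 'v \<Rightarrow> bool" where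
  "technicolour P w \<longleftrightarrow>
     (\<exists>A\<in>P. \<exists>B\<in>P. A \<noteq> B \<and> (\<exists>e\<in>A. w \<in> e) \<and> (\<exists>f\<in>B. w \<in> f))"

definition parallel_connection ::
  "('v set \<times> 'v set set) list \<Rightarrow> 'v \<Rightarrow> 'v \<Rightarrow> 'v set \<Rightarrow> 'v set set \<Rightarrow> bool" where
  "parallel_connection Hs u v VV EE \<longleftrightarrow>
     (\<forall>H\<in>set Hs. is_graph (fst H) (snd H) \<and> {u, v} \<in> snd H) \<and>
     (\<forall>i<length Hs. \<forall>j<length Hs. i \<noteq> j \<longrightarrow>
        fst (Hs ! i) \<inter> fst (Hs ! j) = {u, v} \<and> snd (Hs ! i) \<inter> snd (Hs ! j) = {{u, v}}) \<and>
     VV = (\<Union>H\<in>set Hs. fst H) \<and> EE = (\<Union>H\<in>set Hs. snd H)"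

end

theory Submission
  imports Defs "HOL-Library.Function_Algebras"
begin

lemma sum_fun_apply: "(\<Sum>a\<in>A. f a) x = (\<Sum>a\<in>A. f a x)"
  for f :: "'a \<Rightarrow> 'b \<Rightarrow> 'c::comm_monoid_add"
  by (induction A rule: infinite_finite_induct) auto

interpretation FV: vector_space "\<lambda>(r::real) (f::'a\<Rightarrow>real) x. r * f x"
  by unfold_locales (auto simp: fun_eq_iff algebra_simps)

lemma lc_eq: "(\<Sum>e\<in>S. (\<lambda>x. c e * R e x)) = (\<lambda>x. \<Sum>e\<in>S. c e * (R e x :: real))"
  by (rule ext, simp add: sum_fun_apply)

lemma lc_in_span:
  "(\<lambda>x. \<Sum>e\<in>S. c e * (R e x::real)) \<in> FV.span (R ` S)"
proof -
  have "(\<Sum>e\<in>S. (\<lambda>x. c e * R e x)) \<in> FV.span (R ` S)"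
    by (intro FV.span_sum FV.span_scale FV.span_base) auto
  then show ?thesis by (simp add: lc_eq)
qed

lemma span_lc:
  assumes "finite S" "inj_on R S" "w \<in> FV.span (R ` S)"
  shows "\<exists>c. w = (\<lambda>x. \<Sum>e\<in>S. c e * (R e x::real))"
proof -
  have fin: "finite (R ` S)" using assms by auto
  from assms(3) obtain u where "w = (\<Sum>v\<in>R ` S. (\<lambda>x. u v * v x))"
    unfolding FV.span_finite[OF fin] by auto
  also have "\<dots> = (\<Sum>e\<in>S. (\<lambda>x. u (R e) * R e x))"
    by (simp add: sum.reindex[OF assms(2)])
  finally show ?thesis by (auto simp: lc_eq)
qed

lemma rig_indepD: "rig_indep d p X \<Longrightarrow> (\<And>col. (\<Sum>e\<in>X. c e * rig_row d p e col) = 0) \<Longrightarrow> e \<in> X \<Longrightarrow> c e = 0"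
  unfolding rig_indep_def by blast

lemma indep_subset: "rig_indep d p X \<Longrightarrow> Y \<subseteq> X \<Longrightarrow> rig_indep d p Y"
  unfolding rig_indep_def
proof (intro conjI allI impI ballI)
  assume a: "finite X \<and> (\<forall>c. (\<forall>col. (\<Sum>e\<in>X. c e * rig_row d p e col) = 0) \<longrightarrow> (\<forall>e\<in>X. c e = 0))"
    and s: "Y \<subseteq> X"
  then show "finite Y" by (auto intro: finite_subset)
  fix c e assume z: "\<forall>col. (\<Sum>e\<in>Y. c e * rig_row d p e col) = 0" and e: "e \<in> Y"
  let ?c = "\<lambda>e. if e \<in> Y then c e else 0"
  have "\<forall>col. (\<Sum>e\<in>X. ?c e * rig_row d p e col) = 0"
  proof
    fix col
    have "(\<Sum>e\<in>X. ?c e * rig_row d p e col) = (\<Sum>e\<in>Y. ?c e * rig_row d p e col)"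
      using a s by (intro sum.mono_neutral_right) auto
    then show "(\<Sum>e\<in>X. ?c e * rig_row d p e col) = 0" using z by simp
  qed
  then have "?c e = 0" using a e s unfolding rig_indep_def[symmetric] by (intro rig_indepD[of d p X ?c]) auto
  then show "c e = 0" using e by simp
qed

lemma indep_inj: "rig_indep d p X \<Longrightarrow> inj_on (rig_row d p) X"
proof (rule inj_onI, rule ccontr)
  fix e f assume a: "rig_indep d p X" "e \<in> X" "f \<in> X" "rig_row d p e = rig_row d p f" "e \<noteq> f"
  let ?c = "\<lambda>g. if g = e then 1 else if g = f then -1 else (0::real)"
  have fin: "finite X" using a unfolding rig_indep_def by auto
  have "\<forall>col. (\<Sum>g\<in>X. ?c g * rig_row d p g col) = 0"
  proof
    fix col
    have "(\<Sum>g\<in>X. ?c g * rig_row d p g col) = (\<Sum>g\<in>{e,f}. ?c g * rig_row d p g col)"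
      using a fin by (intro sum.mono_neutral_right) auto
    also have "\<dots> = 0" using a by simp
    finally show "(\<Sum>g\<in>X. ?c g * rig_row d p g col) = 0" .
  qed
  then have "?c e = 0" using a by (intro rig_indepD[of d p X ?c]) auto
  then show False by simp
qed

lemma indep_FV: "rig_indep d p X \<Longrightarrow> FV.independent (rig_row d p ` X)"
proof -
  assume a: "rig_indep d p X"
  have fin: "finite X" using a unfolding rig_indep_def by auto
  have inj: "inj_on (rig_row d p) X" using indep_inj[OF a] .
  show ?thesis
  proof (rule FV.independent_if_scalars_zero)
    show "finite (rig_row d p ` X)" using fin by auto
    fix f x assume z: "(\<Sum>x\<in>rig_row d p ` X. (\<lambda>y. f x * x y)) = 0" and x: "x \<in> rig_row d p ` X"
    have "(\<Sum>e\<in>X. (\<lambda>y. f (rig_row d p e) * rig_row d p e y)) = 0"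
      using z by (simp add: sum.reindex[OF inj])
    then have "\<forall>col. (\<Sum>e\<in>X. f (rig_row d p e) * rig_row d p e col) = 0"
      by (simp add: lc_eq fun_eq_iff)
    then have "\<forall>e\<in>X. f (rig_row d p e) = 0" using a by (auto intro: rig_indepD[of d p X "\<lambda>e. f (rig_row d p e)"])
    then show "f x = 0" using x by auto
  qed
qed

lemma FV_indep: 
  assumes "finite X" "inj_on (rig_row d p) X" "FV.independent (rig_row d p ` X)"
  shows "rig_indep d p X"
  unfolding rig_indep_def
proof (intro conjI allI impI ballI)
  show "finite X" by fact
  fix c e assume z: "\<forall>col. (\<Sum>e\<in>X. c e * rig_row d p e col) = 0" and e: "e \<in> X"
  let ?u = "\<lambda>v. c (the_inv_into X (rig_row d p) v)"
  have fin: "finite (rig_row d p ` X)" using assms by auto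
  have "(\<Sum>v\<in>rig_row d p ` X. (\<lambda>y. ?u v * v y)) = (\<Sum>e\<in>X. (\<lambda>y. c e * rig_row d p e y))"
    by (simp add: sum.reindex[OF assms(2)] the_inv_into_f_f[OF assms(2)])
  also have "\<dots> = 0" using z by (simp add: lc_eq fun_eq_iff)
  finally have E: "(\<Sum>v\<in>rig_row d p ` X. (\<lambda>y. ?u v * v y)) = 0" .
  have H: "\<And>u. (\<Sum>v\<in>rig_row d p ` X. (\<lambda>x. u v * v x)) = 0 \<Longrightarrow> \<forall>v\<in>rig_row d p ` X. u v = 0"
    using assms(3) unfolding FV.dependent_finite[OF fin] by blast
  have "\<forall>v\<in>rig_row d p ` X. ?u v = 0" by (rule H[OF E])
  then show "c e = 0" using e the_inv_into_f_f[OF assms(2) e] by force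
qed

lemma indep_card_bound:
  assumes "finite S" "rig_indep d p X" "\<forall>e\<in>X. rig_row d p e \<in> FV.span (rig_row d p ` S)"
  shows "card X \<le> card S"
proof -
  have "card (rig_row d p ` X) \<le> card (rig_row d p ` S)"
    using FV.independent_span_bound[of "rig_row d p ` S" "rig_row d p ` X"] assms indep_FV[OF assms(2)]
    by auto
  also have "\<dots> \<le> card S" using assms(1) card_image_le by blast
  finally show ?thesis using card_image[OF indep_inj[OF assms(2)]] by simp
qed


lemma rank_facts:
  assumes "finite F"
  shows "\<exists>I\<subseteq>F. rig_indep d p I \<and> card I = rig_rank d p F"
    and "I \<subseteq> F \<Longrightarrow> rig_indep d p I \<Longrightarrow> card I \<le> rig_rank d p F"
proof -
  let ?S = "card ` {I. I \<subseteq> F \<and> rig_indep d p I}"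
  have fin: "finite ?S" using assms by auto
  have "rig_indep d p {}" unfolding rig_indep_def by auto
  then have ne: "?S \<noteq> {}" by auto
  have "rig_rank d p F \<in> ?S" unfolding rig_rank_def using Max_in[OF fin ne] .
  then show "\<exists>I\<subseteq>F. rig_indep d p I \<and> card I = rig_rank d p F" by auto
  show "I \<subseteq> F \<Longrightarrow> rig_indep d p I \<Longrightarrow> card I \<le> rig_rank d p F"
    unfolding rig_rank_def using fin by (intro Max_ge) auto
qed

lemma rank_le_card: "finite F \<Longrightarrow> rig_rank d p F \<le> card F"
  by (metis rank_facts(1) card_mono)

lemma rank_span:
  assumes "finite F" "I \<subseteq> F" "rig_indep d p I" "card I = rig_rank d p F" "e \<in> F"
  shows "rig_row d p e \<in> FV.span (rig_row d p ` I)"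
proof (rule ccontr)
  assume n: "rig_row d p e \<notin> FV.span (rig_row d p ` I)"
  then have eI: "e \<notin> I" using FV.span_base by blast
  have "FV.independent (insert (rig_row d p e) (rig_row d p ` I))"
    using FV.independent_insertI[OF n indep_FV[OF assms(3)]] .
  moreover have "inj_on (rig_row d p) (insert e I)"
  proof -
    have "rig_row d p e \<notin> rig_row d p ` I" using n FV.span_superset by blast
    then show ?thesis using indep_inj[OF assms(3)] by (simp add: inj_on_insert) blast
  qed
  moreover have "finite (insert e I)" using assms by (auto intro: finite_subset)
  ultimately have "rig_indep d p (insert e I)" by (intro FV_indep) auto
  then have "card (insert e I) \<le> rig_rank d p F" using rank_facts(2)[OF assms(1)] assms by auto
  moreover have "card (insert e I) = card I + 1" using eI assms(1,2) finite_subset by fastforce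
  ultimately show False using assms(4) by simp
qed

lemma rank_le_span:
  assumes "finite F" "finite S" "\<forall>e\<in>F. rig_row d p e \<in> FV.span (rig_row d p ` S)"
  shows "rig_rank d p F \<le> card S"
  using rank_facts(1)[OF assms(1)] indep_card_bound[OF assms(2)] assms(3) by (metis subsetD)

lemma span_sub_span:
  assumes "\<forall>e\<in>A. rig_row d p e \<in> FV.span (rig_row d p ` B)" "w \<in> FV.span (rig_row d p ` A)"
  shows "w \<in> FV.span (rig_row d p ` B)"
proof -
  have "rig_row d p ` A \<subseteq> FV.span (rig_row d p ` B)" using assms(1) by auto
  then have "FV.span (rig_row d p ` A) \<subseteq> FV.span (rig_row d p ` B)"
    by (intro FV.span_minimal FV.subspace_span)
  then show ?thesis using assms(2) by auto
qed

lemma circuit_coeffs: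
  assumes "rig_circuit d p C"
  shows "\<exists>c. (\<forall>col. (\<Sum>e\<in>C. c e * rig_row d p e col) = 0) \<and> (\<forall>e\<in>C. c e \<noteq> 0)"
proof -
  have fin: "finite C" using assms unfolding rig_circuit_def by auto
  from assms obtain c e0 where z: "\<forall>col. (\<Sum>e\<in>C. c e * rig_row d p e col) = 0" and e0: "e0 \<in> C" "c e0 \<noteq> 0"
    unfolding rig_circuit_def rig_indep_def using fin by blast
  let ?T = "{e\<in>C. c e \<noteq> 0}"
  have z2: "\<forall>col. (\<Sum>e\<in>?T. c e * rig_row d p e col) = 0"
  proof
    fix col
    have "(\<Sum>e\<in>C. c e * rig_row d p e col) = (\<Sum>e\<in>?T. c e * rig_row d p e col)"
      using fin by (intro sum.mono_neutral_right) auto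
    then show "(\<Sum>e\<in>?T. c e * rig_row d p e col) = 0" using z by simp
  qed
  have "\<not> rig_indep d p ?T"
  proof
    assume "rig_indep d p ?T"
    then have "c e0 = 0" using z2 e0 by (intro rig_indepD[of d p ?T c]) auto
    then show False using e0 by simp
  qed
  then have "\<not> ?T \<subset> C" using assms unfolding rig_circuit_def by blast
  then have "?T = C" by blast
  then show ?thesis using z by blast
qed

lemma generic_distinct:
  assumes "generic d V p" "0 < d" "a \<in> V" "b \<in> V" "a \<noteq> b"
  shows "p a 0 \<noteq> p b 0"
proof
  assume eq: "p a 0 = p b 0"
  define m1 :: "'a \<times> nat \<Rightarrow> nat" where "m1 = (\<lambda>i. if i = (a,0) then 1 else 0)"
  define m2 :: "'a \<times> nat \<Rightarrow> nat" where "m2 = (\<lambda>i. if i = (b,0) then 1 else 0)"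
  have m12: "m1 \<noteq> m2" using assms(5) unfolding m1_def m2_def fun_eq_iff by (metis prod.inject zero_neq_one)
  define c :: "('a \<times> nat \<Rightarrow> nat) \<Rightarrow> rat" where "c = (\<lambda>m. if m = m1 then 1 else if m = m2 then -1 else 0)"
  have cs: "{m. c m \<noteq> 0} = {m1, m2}" using m12 unfolding c_def by auto
  have s1: "{i. m1 i \<noteq> 0} = {(a,0)}" unfolding m1_def by auto
  have s2: "{i. m2 i \<noteq> 0} = {(b,0)}" unfolding m2_def by auto
  have hyp: "finite {m. c m \<noteq> 0} \<and>
        (\<forall>m. c m \<noteq> 0 \<longrightarrow> finite {i. m i \<noteq> 0} \<and> {i. m i \<noteq> 0} \<subseteq> V \<times> {..<d}) \<and>
        (\<exists>m. c m \<noteq> 0)"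
  proof (intro conjI allI impI)
    show "finite {m. c m \<noteq> 0}" unfolding cs by simp
    show "\<exists>m. c m \<noteq> 0" using cs by auto
    fix m assume "c m \<noteq> 0"
    then have "m = m1 \<or> m = m2" using cs by auto
    then show "finite {i. m i \<noteq> 0}" "{i. m i \<noteq> 0} \<subseteq> V \<times> {..<d}"
      using assms by (auto simp: m1_def m2_def split: if_splits)
  qed
  have "(\<Sum>m | c m \<noteq> 0. of_rat (c m) * (\<Prod>i | m i \<noteq> 0. (\<lambda>(w, i). p w i) i ^ m i)) \<noteq> 0"
    using assms(1) unfolding generic_def alg_indep_over_rat_def
    by (rule allE[where x=c]) (erule mp, rule hyp)
  moreover have "(\<Sum>m | c m \<noteq> 0. of_rat (c m) * (\<Prod>i | m i \<noteq> 0. (\<lambda>(w, i). p w i) i ^ m i)) = p a 0 - p b 0"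
    unfolding cs using m12 by (simp add: s1 s2 c_def m1_def m2_def)
  ultimately show False using eq by simp
qed


lemma row_expand: "rig_row d p e (x,i) = (if x \<in> e \<and> i < d then (\<Sum>y\<in>e. p x i - p y i) else 0)"
  unfolding rig_row_def by simp

lemma sum_V_to_e:
  assumes "finite V" "e \<subseteq> V"
  shows "(\<Sum>x\<in>V. (if x \<in> e then g x else 0)) = (\<Sum>x\<in>e. g x)"
proof -
  have "(\<Sum>x\<in>V. (if x \<in> e then g x else 0)) = (\<Sum>x\<in>V \<inter> e. g x)"
    using assms(1) by (simp add: sum.inter_restrict)
  also have "V \<inter> e = e" using assms(2) by blast
  finally show ?thesis .
qed

lemma row_trans0:
  assumes "finite V" "e \<subseteq> V" "i < d"
  shows "(\<Sum>x\<in>V. rig_row d p e (x,i)) = 0"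
proof -
  have "(\<Sum>x\<in>V. rig_row d p e (x,i)) = (\<Sum>x\<in>V. (if x \<in> e then (\<Sum>y\<in>e. p x i - p y i) else 0))"
    using assms(3) by (simp add: row_expand)
  also have "\<dots> = (\<Sum>x\<in>e. \<Sum>y\<in>e. p x i - p y i)" using sum_V_to_e[OF assms(1,2)] .
  also have "\<dots> = (\<Sum>x\<in>e. \<Sum>y\<in>e. p x i) - (\<Sum>x\<in>e. \<Sum>y\<in>e. p y i)"
    by (simp add: sum_subtractf)
  also have "(\<Sum>x\<in>e. \<Sum>y\<in>e. p y i) = (\<Sum>x\<in>e. \<Sum>y\<in>e. p x i)" by (rule sum.swap)
  finally show ?thesis by simp
qed

lemma row_rot0:
  assumes "finite V" "e \<subseteq> V" "i < d" "j < d"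
  shows "(\<Sum>x\<in>V. rig_row d p e (x,i) * p x j - rig_row d p e (x,j) * p x i) = 0"
proof -
  have "(\<Sum>x\<in>V. rig_row d p e (x,i) * p x j - rig_row d p e (x,j) * p x i)
      = (\<Sum>x\<in>V. (if x \<in> e then (\<Sum>y\<in>e. p x i - p y i) * p x j - (\<Sum>y\<in>e. p x j - p y j) * p x i else 0))"
    using assms(3,4) by (intro sum.cong) (auto simp: row_expand)
  also have "\<dots> = (\<Sum>x\<in>e. (\<Sum>y\<in>e. p x i - p y i) * p x j - (\<Sum>y\<in>e. p x j - p y j) * p x i)"
    using sum_V_to_e[OF assms(1,2)] .
  also have "\<dots> = (\<Sum>x\<in>e. \<Sum>y\<in>e. p x i * p y j - p y i * p x j)"
  proof (intro sum.cong refl)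
    fix x
    have "(\<Sum>y\<in>e. p x i - p y i) * p x j - (\<Sum>y\<in>e. p x j - p y j) * p x i
        = (\<Sum>y\<in>e. (p x i - p y i) * p x j - (p x j - p y j) * p x i)"
      by (simp only: sum_distrib_right sum_subtractf[symmetric])
    also have "\<dots> = (\<Sum>y\<in>e. p x i * p y j - p y i * p x j)"
      by (rule sum.cong) (auto simp: algebra_simps)
    finally show "(\<Sum>y\<in>e. p x i - p y i) * p x j - (\<Sum>y\<in>e. p x j - p y j) * p x i
        = (\<Sum>y\<in>e. p x i * p y j - p y i * p x j)" .
  qed
  also have "\<dots> = (\<Sum>x\<in>e. \<Sum>y\<in>e. p x i * p y j) - (\<Sum>x\<in>e. \<Sum>y\<in>e. p y i * p x j)"
    by (simp add: sum_subtractf)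
  also have "(\<Sum>x\<in>e. \<Sum>y\<in>e. p y i * p x j) = (\<Sum>x\<in>e. \<Sum>y\<in>e. p x i * p y j)" by (rule sum.swap)
  finally show ?thesis by simp
qed

lemma sum_two:
  assumes "finite V" "u \<in> V" "v \<in> V" "u \<noteq> v" "\<forall>x. x \<noteq> u \<longrightarrow> x \<noteq> v \<longrightarrow> g x = 0"
  shows "(\<Sum>x\<in>V. g x) = g u + (g v :: real)"
proof -
  have "(\<Sum>x\<in>V. g x) = (\<Sum>x\<in>{u,v}. g x)"
    using assms by (intro sum.mono_neutral_right) auto
  then show ?thesis using assms(4) by simp
qed

lemma geo:
  assumes finV: "finite V" and E: "\<forall>e\<in>F. e \<subseteq> V" and finF: "finite F"
    and uv: "u \<in> V" "v \<in> V" "u \<noteq> v" and d: "0 < d" and puv: "p u 0 \<noteq> p v 0"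
    and z: "\<forall>x i. x \<noteq> u \<longrightarrow> x \<noteq> v \<longrightarrow> (\<Sum>e\<in>F. c e * rig_row d p e (x,i)) = 0"
  shows "\<exists>l. \<forall>col. (\<Sum>e\<in>F. c e * rig_row d p e col) = l * rig_row d p {u,v} col"
proof -
  define w where "w = (\<lambda>col. \<Sum>e\<in>F. c e * rig_row d p e col)"
  have wz: "\<forall>x i. x \<noteq> u \<longrightarrow> x \<noteq> v \<longrightarrow> w (x,i) = 0" using z unfolding w_def by auto
  have T: "w (u,i) + w (v,i) = 0" if i: "i < d" for i
  proof -
    have "(\<Sum>x\<in>V. w (x,i)) = (\<Sum>e\<in>F. c e * (\<Sum>x\<in>V. rig_row d p e (x,i)))"
      unfolding w_def by (simp add: sum_distrib_left sum.swap[of _ V])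
    also have "\<dots> = 0" using row_trans0[OF finV _ i] E by simp
    finally show ?thesis using sum_two[OF finV uv, of "\<lambda>x. w (x,i)"] wz by simp
  qed
  have Rt: "w (u,i) * p u j - w (u,j) * p u i + (w (v,i) * p v j - w (v,j) * p v i) = 0"
    if i: "i < d" and j: "j < d" for i j
  proof -
    have "(\<Sum>x\<in>V. w (x,i) * p x j - w (x,j) * p x i)
       = (\<Sum>e\<in>F. c e * (\<Sum>x\<in>V. rig_row d p e (x,i) * p x j - rig_row d p e (x,j) * p x i))"
      unfolding w_def by (simp add: sum_distrib_left sum_distrib_right sum_subtractf sum.swap[of _ V] algebra_simps)
    also have "\<dots> = 0" using row_rot0[OF finV _ i j] E by simp
    finally show ?thesis using sum_two[OF finV uv, of "\<lambda>x. w (x,i) * p x j - w (x,j) * p x i"] wz by simp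
  qed
  define l where "l = w (u,0) / (p u 0 - p v 0)"
  have dn: "p u 0 - p v 0 \<noteq> 0" using puv by simp
  have main: "w col = l * rig_row d p {u,v} col" for col
  proof (cases col)
    case (Pair x j)
    show ?thesis
    proof (cases "j < d")
      case False
      then show ?thesis unfolding w_def Pair by (simp add: row_expand)
    next
      case True
      have v0: "w (v,0) = - w (u,0)" using T[OF d] by simp
      have vj: "w (v,j) = - w (u,j)" using T[OF True] by simp
      have r0: "w (u,0) * (p u j - p v j) = w (u,j) * (p u 0 - p v 0)"
        using Rt[OF d True] unfolding v0 vj by (simp add: algebra_simps)
      have "l * (p u j - p v j) = w (u,0) * (p u j - p v j) / (p u 0 - p v 0)" unfolding l_def by simp
      also have "\<dots> = w (u,j) * (p u 0 - p v 0) / (p u 0 - p v 0)" using r0 by simp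
      also have "\<dots> = w (u,j)" using dn by simp
      finally have wu: "w (u,j) = l * (p u j - p v j)" by simp
      have ru: "rig_row d p {u,v} (u,j) = p u j - p v j" using True uv(3) by (simp add: row_expand)
      have rv: "rig_row d p {u,v} (v,j) = p v j - p u j" using True uv(3) by (simp add: row_expand)
      show ?thesis
      proof (cases "x = u")
        case True
        then show ?thesis using wu ru Pair by simp
      next
        case xu: False
        show ?thesis
        proof (cases "x = v")
          case True
          have "w (v,j) = - w (u,j)" using T[OF \<open>j < d\<close>] by simp
          also have "\<dots> = l * (p v j - p u j)" using wu by (simp add: algebra_simps)
          also have "\<dots> = l * rig_row d p {u,v} (v,j)" using rv by simp
          finally show ?thesis using Pair True by simp
        next
          case False
          then show ?thesis using wz xu Pair by (simp add: row_expand)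
        qed
      qed
    qed
  qed
  then show ?thesis unfolding w_def by blast
qed


locale S3 =
  fixes d k :: nat and V :: "'v set" and D :: "'v set set"
    and p :: "'v \<Rightarrow> nat \<Rightarrow> real" and P :: "'v set set set" and u v :: 'v
  assumes d1: "d \<ge> 1" and k2: "k \<ge> 2"
    and G: "is_graph V D"
    and gen: "generic d V p"
    and con: "rig_connected d p D"
    and kf: "kfold_circuit d p k D"
    and pp: "principal_partition d p k D P"
    and uv: "u \<noteq> v"
    and tech: "{w \<in> V. technicolour P w} = {u, v}"
begin

abbreviation "R \<equiv> rig_row d p"
abbreviation "e0 \<equiv> {u,v}"

lemma finV: "finite V" using G unfolding is_graph_def by auto
lemma edgeV: "e \<in> D \<Longrightarrow> e \<subseteq> V" using G unfolding is_graph_def by auto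
lemma finD: "finite D" using kf unfolding kfold_circuit_def by auto
lemma uV: "u \<in> V" and vV: "v \<in> V" using tech by auto
lemma dpos: "0 < d" using d1 by simp
lemma puv: "p u 0 \<noteq> p v 0" using generic_distinct[OF gen dpos uV vV uv] .
lemma kD: "rig_rank d p D + k = card D" using kf unfolding kfold_circuit_def by auto
lemma PU: "\<Union>P = D" using pp unfolding principal_partition_def by auto
lemma Pne: "A \<in> P \<Longrightarrow> A \<noteq> {}" using pp unfolding principal_partition_def by auto
lemma Pdisj: "A \<in> P \<Longrightarrow> B \<in> P \<Longrightarrow> A \<noteq> B \<Longrightarrow> A \<inter> B = {}"
  using pp unfolding principal_partition_def by auto
lemma Pcomp: "A \<in> P \<Longrightarrow> rig_rank d p (D - A) + (k - 1) = card (D - A)"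
proof -
  assume "A \<in> P"
  then have "D - A \<in> {D'. D' \<subseteq> D \<and> kfold_circuit d p (k - 1) D'}"
    using pp unfolding principal_partition_def by blast
  then show ?thesis unfolding kfold_circuit_def by auto
qed
lemma finP: "finite P" using PU finD by (simp add: finite_UnionD)
lemma PsubD: "A \<in> P \<Longrightarrow> A \<subseteq> D" using PU by blast
lemma finA: "A \<in> P \<Longrightarrow> finite A" using PsubD finD finite_subset by blast

lemma sep:
  assumes "A \<in> P" "e \<in> A" "f \<in> D" "f \<notin> A" "x \<in> e" "x \<in> f"
  shows "x = u \<or> x = v"
proof -
  obtain B where B: "B \<in> P" "f \<in> B" using PU assms(3) by blast
  have "B \<noteq> A" using B assms(4) by blast
  then have "technicolour P x" unfolding technicolour_def using assms B by blast
  moreover have "x \<in> V" using edgeV assms PsubD by blast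
  ultimately show ?thesis using tech by blast
qed

lemma two: "A \<in> P \<Longrightarrow> \<exists>B\<in>P. B \<noteq> A"
proof -
  assume A: "A \<in> P"
  have "technicolour P u" using tech by blast
  then obtain A0 B0 where "A0 \<in> P" "B0 \<in> P" "A0 \<noteq> B0" unfolding technicolour_def by blast
  then show ?thesis by metis
qed

lemma Re0_nz: "R e0 (u,0) \<noteq> 0"
  using puv uv dpos by (simp add: row_expand)

lemma split:
  assumes C: "finite C" "C \<subseteq> D" and z: "\<forall>col. (\<Sum>e\<in>C. c e * R e col) = 0" and A: "A \<in> P"
  shows "\<exists>l. \<forall>col. (\<Sum>e\<in>C \<inter> A. c e * R e col) = l * R e0 col"
proof -
  have h1: "\<forall>e\<in>C \<inter> A. e \<subseteq> V" using edgeV C by blast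
  have h2: "finite (C \<inter> A)" using C by simp
  have h3: "\<forall>x i. x \<noteq> u \<longrightarrow> x \<noteq> v \<longrightarrow> (\<Sum>e\<in>C \<inter> A. c e * R e (x, i)) = 0"
  proof (intro allI impI)
    fix x i assume xu: "x \<noteq> u" and xv: "x \<noteq> v"
    show "(\<Sum>e\<in>C \<inter> A. c e * R e (x, i)) = 0"
    proof (cases "\<exists>e\<in>C \<inter> A. x \<in> e")
      case True
      then obtain e where e: "e \<in> A" "x \<in> e" by blast
      have nf: "\<forall>f\<in>C - A. x \<notin> f" using sep[OF A e(1) _ _ e(2)] C xu xv by blast
      have "(\<Sum>e\<in>C - A. c e * R e (x, i)) = 0"
        using nf by (intro sum.neutral) (simp add: row_expand)
      moreover have "(\<Sum>e\<in>C. c e * R e (x, i)) = (\<Sum>e\<in>C \<inter> A. c e * R e (x, i)) + (\<Sum>e\<in>C - A. c e * R e (x, i))"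
        using C(1) by (rule sum.Int_Diff)
      ultimately show ?thesis using z by simp
    next
      case False
      then show ?thesis by (intro sum.neutral) (auto simp: row_expand)
    qed
  qed
  show ?thesis using geo[OF finV h1 h2 uV vV uv dpos puv h3] .
qed

lemma step1:
  assumes A: "A \<in> P" and f: "f \<in> A"
  shows "\<exists>c. (\<forall>col. (\<Sum>e\<in>A. c e * R e col) = R e0 col) \<and> c f \<noteq> 0"
proof -
  obtain B where B: "B \<in> P" "B \<noteq> A" using two[OF A] by blast
  obtain g where g: "g \<in> B" using Pne[OF B(1)] by blast
  have gA: "g \<notin> A" using Pdisj[OF A B(1)] B g by blast
  have fD: "f \<in> D" "g \<in> D" using PsubD A B f g by blast+
  have "f \<noteq> g" using gA f by blast
  then obtain C where C: "C \<subseteq> D" "rig_circuit d p C" "f \<in> C" "g \<in> C"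
    using con fD unfolding rig_connected_def by blast
  have finC: "finite C" using C unfolding rig_circuit_def by auto
  obtain c where c: "\<forall>col. (\<Sum>e\<in>C. c e * R e col) = 0" "\<forall>e\<in>C. c e \<noteq> 0"
    using circuit_coeffs[OF C(2)] by blast
  obtain l where l: "\<forall>col. (\<Sum>e\<in>C \<inter> A. c e * R e col) = l * R e0 col"
    using split[OF finC C(1) c(1) A] by blast
  have l0: "l \<noteq> 0"
  proof
    assume "l = 0"
    have z: "(\<Sum>e\<in>C \<inter> A. c e * R e col) = 0" for col
      using spec[OF l, of col] \<open>l = 0\<close> by simp
    have "C \<inter> A \<subset> C" using C gA by blast
    then have "rig_indep d p (C \<inter> A)" using C(2) unfolding rig_circuit_def by blast
    then have "c f = 0" using rig_indepD[OF _ z] C f by blast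
    then show False using c C by blast
  qed
  let ?c = "\<lambda>e. if e \<in> C then c e / l else 0"
  have "\<forall>col. (\<Sum>e\<in>A. ?c e * R e col) = R e0 col"
  proof
    fix col
    have "(\<Sum>e\<in>A. ?c e * R e col) = (\<Sum>e\<in>C \<inter> A. ?c e * R e col)"
      using finA[OF A] by (intro sum.mono_neutral_right) auto
    also have "\<dots> = (\<Sum>e\<in>C \<inter> A. c e * R e col) / l"
      by (simp add: sum_divide_distrib)
    also have "\<dots> = R e0 col" using spec[OF l, of col] l0 by simp
    finally show "(\<Sum>e\<in>A. ?c e * R e col) = R e0 col" .
  qed
  moreover have "?c f \<noteq> 0" using c C l0 by simp
  ultimately show ?thesis by (intro exI[of _ ?c]) simp
qed

lemma Re0_span: "A \<in> P \<Longrightarrow> R e0 \<in> FV.span (R ` A)"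
proof -
  assume A: "A \<in> P"
  obtain f where "f \<in> A" using Pne[OF A] by blast
  then obtain c where c: "\<forall>col. (\<Sum>e\<in>A. c e * R e col) = R e0 col" using step1[OF A] by blast
  have "(\<lambda>x. \<Sum>e\<in>A. c e * R e x) \<in> FV.span (R ` A)" by (rule lc_in_span)
  moreover have "(\<lambda>x. \<Sum>e\<in>A. c e * R e x) = R e0" using c by auto
  ultimately show ?thesis by simp
qed

end


context S3 begin

lemma indepP: assumes A: "A \<in> P" shows "rig_indep d p A"
proof -
  have finDA: "finite (D - A)" using finD by simp
  have finA': "finite A" using finA[OF A] .
  obtain I1 where I1: "I1 \<subseteq> D - A" "rig_indep d p I1" "card I1 = rig_rank d p (D - A)"
    using rank_facts(1)[OF finDA] by blast
  obtain I2 where I2: "I2 \<subseteq> A" "rig_indep d p I2" "card I2 = rig_rank d p A"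
    using rank_facts(1)[OF finA'] by blast
  have finI1: "finite I1" using I1 finDA finite_subset by blast
  have finI2: "finite I2" using I2 finA' finite_subset by blast
  have spA: "\<forall>e\<in>A. R e \<in> FV.span (R ` I2)" using rank_span[OF finA' I2(1,2,3)] by blast
  have spDA: "\<forall>e\<in>D - A. R e \<in> FV.span (R ` I1)" using rank_span[OF finDA I1(1,2,3)] by blast
  have "R e0 \<in> FV.span (R ` I2)" using span_sub_span[OF spA Re0_span[OF A]] .
  then obtain a where a: "R e0 = (\<lambda>x. \<Sum>e\<in>I2. a e * R e x)"
    using span_lc[OF finI2 indep_inj[OF I2(2)]] by blast
  have "\<exists>f\<in>I2. a f \<noteq> 0"
  proof (rule ccontr)
    assume "\<not> (\<exists>f\<in>I2. a f \<noteq> 0)"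
    then have "R e0 (u,0) = 0" using a by simp
    then show False using Re0_nz by simp
  qed
  then obtain f where f: "f \<in> I2" "a f \<noteq> 0" by blast
  obtain B where B: "B \<in> P" "B \<noteq> A" using two[OF A] by blast
  have BDA: "B \<subseteq> D - A" using PsubD[OF B(1)] Pdisj[OF A B(1)] B(2) by blast
  define S where "S = I1 \<union> (I2 - {f})"
  have finS: "finite S" unfolding S_def using finI1 finI2 by simp
  have I1S: "FV.span (R ` I1) \<subseteq> FV.span (R ` S)" unfolding S_def by (intro FV.span_mono) auto
  have "R e0 \<in> FV.span (R ` (D - A))"
    using Re0_span[OF B(1)] FV.span_mono[of "R ` B" "R ` (D - A)"] BDA by blast
  then have e0S: "R e0 \<in> FV.span (R ` S)" using span_sub_span[OF spDA] I1S by blast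
  define L where "L = (\<lambda>x. \<Sum>e\<in>I2 - {f}. a e * R e x)"
  have LS: "L \<in> FV.span (R ` S)"
  proof -
    have "L \<in> FV.span (R ` (I2 - {f}))" unfolding L_def by (rule lc_in_span)
    moreover have "FV.span (R ` (I2 - {f})) \<subseteq> FV.span (R ` S)" unfolding S_def by (intro FV.span_mono) auto
    ultimately show ?thesis by blast
  qed
  have Rf: "R f = (\<lambda>x. (1 / a f) * (R e0 - L) x)"
  proof
    fix x
    have "R e0 x = a f * R f x + L x"
      unfolding a L_def using finI2 f(1) by (simp add: sum.remove)
    then show "R f x = (1 / a f) * (R e0 - L) x" using f(2) by (simp add: field_simps)
  qed
  have fS: "R f \<in> FV.span (R ` S)"
    unfolding Rf by (intro FV.span_scale FV.span_diff e0S LS)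
  have I2S: "\<forall>e\<in>I2. R e \<in> FV.span (R ` S)"
  proof
    fix e assume e: "e \<in> I2"
    show "R e \<in> FV.span (R ` S)"
    proof (cases "e = f")
      case True then show ?thesis using fS by simp
    next
      case False then show ?thesis using e unfolding S_def by (intro FV.span_base) auto
    qed
  qed
  have allD: "\<forall>e\<in>D. R e \<in> FV.span (R ` S)"
  proof
    fix e assume e: "e \<in> D"
    show "R e \<in> FV.span (R ` S)"
    proof (cases "e \<in> A")
      case True then show ?thesis using span_sub_span[OF I2S] spA by blast
    next
      case False then show ?thesis using spDA I1S e by blast
    qed
  qed
  have rD: "rig_rank d p D \<le> card S" using rank_le_span[OF finD finS allD] .
  have cS: "card S \<le> card I1 + (card I2 - 1)"
    unfolding S_def using card_Un_le[of I1 "I2 - {f}"] card_Diff_singleton[OF f(1)] by simp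
  have c1: "card I2 \<ge> 1" using f finI2 by (metis One_nat_def Suc_leI card_gt_0_iff empty_iff)
  have cD: "card D = card (D - A) + card A"
    using PsubD[OF A] finD by (metis add.commute card_Diff_subset card_mono finA' le_add_diff_inverse)
  have cI2: "card I2 \<le> card A" using I2(1) finA' card_mono by blast
  have "card A \<le> card I2"
    using kD Pcomp[OF A] I1(3) rD cS c1 cD k2 by linarith
  then have "card I2 = card A" using cI2 by linarith
  then have "I2 = A" by (rule card_subset_eq[OF finA' I2(1)])
  then show ?thesis using I2(2) by simp
qed

lemma uniq:
  assumes "rig_indep d p A" "\<forall>col. (\<Sum>e\<in>A. a e * R e col) = (\<Sum>e\<in>A. b e * R e col)" "e \<in> A"
  shows "a e = b e"
proof -
  have z: "(\<Sum>e\<in>A. (a e - b e) * R e col) = 0" for col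
    using spec[OF assms(2), of col] by (simp add: left_diff_distrib sum_subtractf)
  have "a e - b e = 0" by (rule rig_indepD[OF assms(1), where c="\<lambda>e. a e - b e"]) (use z assms(3) in auto)
  then show ?thesis by simp
qed

lemma e0part: assumes A: "A \<in> P" "e0 \<in> A" shows "A = {e0}"
proof -
  have "f = e0" if f: "f \<in> A" for f
  proof (rule ccontr)
    assume ne: "f \<noteq> e0"
    obtain c where c: "\<forall>col. (\<Sum>e\<in>A. c e * R e col) = R e0 col" "c f \<noteq> 0" using step1[OF A(1) f] by blast
    let ?b = "\<lambda>e. if e = e0 then 1 else (0::real)"
    have "\<forall>col. (\<Sum>e\<in>A. ?b e * R e col) = R e0 col"
    proof
      fix col
      have "(\<Sum>e\<in>A. ?b e * R e col) = (\<Sum>e\<in>A. if e = e0 then R e col else 0)"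
        by (rule sum.cong) auto
      also have "\<dots> = R e0 col" using A(2) finA[OF A(1)] by simp
      finally show "(\<Sum>e\<in>A. ?b e * R e col) = R e0 col" .
    qed
    then have "\<forall>col. (\<Sum>e\<in>A. c e * R e col) = (\<Sum>e\<in>A. ?b e * R e col)" using c(1) by simp
    then have "c f = ?b f" using uniq[OF indepP[OF A(1)] _ f, where a=c and b="?b"] by blast
    then show False using c(2) ne by simp
  qed
  then show ?thesis using A(2) by blast
qed

end


context S3 begin

lemma circ: assumes A: "A \<in> P" "e0 \<notin> A" shows "rig_circuit d p (insert e0 A)"
  unfolding rig_circuit_def
proof (intro conjI allI impI)
  have finA': "finite A" using finA[OF A(1)] .
  show "finite (insert e0 A)" using finA' by simp
  obtain f0 where f0: "f0 \<in> A" using Pne[OF A(1)] by blast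
  obtain c where c: "\<forall>col. (\<Sum>e\<in>A. c e * R e col) = R e0 col" using step1[OF A(1) f0] by blast
  let ?c = "\<lambda>e. if e = e0 then -1 else c e"
  have z: "(\<Sum>e\<in>insert e0 A. ?c e * R e col) = 0" for col
  proof -
    have "(\<Sum>e\<in>insert e0 A. ?c e * R e col) = - R e0 col + (\<Sum>e\<in>A. ?c e * R e col)"
      using finA' A(2) by simp
    also have "(\<Sum>e\<in>A. ?c e * R e col) = (\<Sum>e\<in>A. c e * R e col)"
      using A(2) by (intro sum.cong) auto
    finally show ?thesis using spec[OF c, of col] by simp
  qed
  show "\<not> rig_indep d p (insert e0 A)"
  proof
    assume "rig_indep d p (insert e0 A)"
    then have "?c e0 = 0" using rig_indepD[of d p "insert e0 A" ?c, OF _ z] by blast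
    then show False by simp
  qed
  fix C' assume C': "C' \<subset> insert e0 A"
  have iA: "rig_indep d p A" using indepP[OF A(1)] .
  show "rig_indep d p C'"
  proof (cases "e0 \<in> C'")
    case False
    then have "C' \<subseteq> A" using C' by blast
    then show ?thesis using indep_subset[OF iA] by blast
  next
    case True
    obtain f where f: "f \<in> A" "f \<notin> C'" using C' True by blast
    have finC: "finite C'" using C' finA' by (meson finite_insert finite_subset psubset_imp_subset)
    show ?thesis unfolding rig_indep_def
    proof (intro conjI allI impI ballI)
      show "finite C'" by fact
      fix b e assume zb: "\<forall>col. (\<Sum>e\<in>C'. b e * R e col) = 0" and e: "e \<in> C'"
      have split0: "(\<Sum>e\<in>C'. b e * R e col) = b e0 * R e0 col + (\<Sum>e\<in>C' - {e0}. b e * R e col)" for col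
        using finC True by (simp add: sum.remove)
      have be0: "b e0 = 0"
      proof (rule ccontr)
        assume nz: "b e0 \<noteq> 0"
        let ?b = "\<lambda>e. if e \<in> C' then - b e / b e0 else 0"
        have "\<forall>col. (\<Sum>e\<in>A. ?b e * R e col) = R e0 col"
        proof
          fix col
          have "(\<Sum>e\<in>A. ?b e * R e col) = (\<Sum>e\<in>C' - {e0}. ?b e * R e col)"
            using finA' C' A(2) by (intro sum.mono_neutral_right) auto
          also have "\<dots> = - (\<Sum>e\<in>C' - {e0}. b e * R e col) / b e0"
            by (simp add: sum_divide_distrib sum_negf[symmetric])
          also have "\<dots> = R e0 col" using split0[of col] spec[OF zb, of col] nz
            by (simp add: field_simps)
          finally show "(\<Sum>e\<in>A. ?b e * R e col) = R e0 col" .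
        qed
        moreover obtain cf where cf: "\<forall>col. (\<Sum>e\<in>A. cf e * R e col) = R e0 col" "cf f \<noteq> 0"
          using step1[OF A(1) f(1)] by blast
        ultimately have "\<forall>col. (\<Sum>e\<in>A. cf e * R e col) = (\<Sum>e\<in>A. ?b e * R e col)" by simp
        then have "cf f = ?b f" using uniq[OF iA _ f(1), where a=cf and b="?b"] by blast
        then show False using cf(2) f(2) by simp
      qed
      have z2: "(\<Sum>e\<in>C' - {e0}. b e * R e col) = 0" for col
        using split0[of col] spec[OF zb, of col] be0 by simp
      have "rig_indep d p (C' - {e0})" using indep_subset[OF iA] C' by blast
      then have "\<forall>e\<in>C' - {e0}. b e = 0" using rig_indepD[OF _ z2] by blast
      then show "b e = 0" using be0 e by (cases "e = e0") auto
    qed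
  qed
qed

end


context S3 begin

lemma count:
  assumes A1: "A1 \<in> P" and Q: "\<forall>A\<in>P - {A1}. e0 \<notin> A"
  shows "rig_rank d p D + card (P - {A1}) = card D"
proof -
  define Q' where "Q' = P - {A1}"
  define fA where "fA = (\<lambda>A::'v set set. SOME f. f \<in> A)"
  have fA: "A \<in> P \<Longrightarrow> fA A \<in> A" for A unfolding fA_def using Pne by (metis some_in_eq)
  have QP: "Q' \<subseteq> P" unfolding Q'_def by blast
  have finQ: "finite Q'" using finP QP finite_subset by blast
  have inj: "inj_on fA Q'"
  proof (rule inj_onI)
    fix A B assume AB: "A \<in> Q'" "B \<in> Q'" "fA A = fA B"
    then have AP: "A \<in> P" and BP: "B \<in> P" using QP by auto
    have "fA A \<in> A" using fA[OF AP] .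
    moreover have "fA A \<in> B" using fA[OF BP] AB(3) by simp
    ultimately have "A \<inter> B \<noteq> {}" by blast
    then show "A = B" using Pdisj[OF AP BP] by blast
  qed
  define F' where "F' = fA ` Q'"
  have F'D: "F' \<subseteq> D" unfolding F'_def using fA QP PsubD by blast
  have cF: "card F' = card Q'" unfolding F'_def using card_image[OF inj] .
  define S where "S = D - F'"
  have finS: "finite S" unfolding S_def using finD by simp
  have cS: "card S = card D - card Q'" unfolding S_def using card_Diff_subset[OF _ F'D] finD F'D cF
    by (metis finite_subset)
  have cQD: "card Q' \<le> card D" using cF F'D finD card_mono by metis
  have A1S: "A1 \<subseteq> S"
  proof
    fix e assume e: "e \<in> A1"
    have "e \<notin> F'"
    proof
      assume "e \<in> F'"
      then obtain A where A: "A \<in> Q'" "e = fA A" unfolding F'_def by blast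
      then have "e \<in> A" "A \<noteq> A1" "A \<in> P" using fA QP unfolding Q'_def by auto
      then show False using Pdisj[OF _ A1] e by blast
    qed
    then show "e \<in> S" unfolding S_def using e PsubD[OF A1] by blast
  qed
  have AS: "A - {fA A} \<subseteq> S" if A: "A \<in> Q'" for A
  proof
    fix e assume e: "e \<in> A - {fA A}"
    have "e \<notin> F'"
    proof
      assume "e \<in> F'"
      then obtain B where B: "B \<in> Q'" "e = fA B" unfolding F'_def by blast
      then have "e \<in> B" using fA QP by blast
      then have "B = A" using Pdisj[of A B] A B QP e by blast
      then show False using B e by blast
    qed
    then show "e \<in> S" unfolding S_def using e PsubD A QP by blast
  qed
  have SA: "S \<inter> A = A - {fA A}" if A: "A \<in> Q'" for A
  proof -
    have "fA A \<in> F'" unfolding F'_def using A by blast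
    then show ?thesis using AS[OF A] unfolding S_def by blast
  qed
  have e0S: "R e0 \<in> FV.span (R ` S)"
    using Re0_span[OF A1] FV.span_mono[of "R ` A1" "R ` S"] A1S by blast
  have allD: "\<forall>e\<in>D. R e \<in> FV.span (R ` S)"
  proof
    fix e assume e: "e \<in> D"
    show "R e \<in> FV.span (R ` S)"
    proof (cases "e \<in> F'")
      case False then show ?thesis using e unfolding S_def by (intro FV.span_base) auto
    next
      case True
      then obtain A where A: "A \<in> Q'" "e = fA A" unfolding F'_def by blast
      have AP: "A \<in> P" using A QP by blast
      have e0A: "e0 \<notin> A" using Q A unfolding Q'_def by blast
      obtain c where c: "\<forall>col. (\<Sum>e\<in>insert e0 A. c e * R e col) = 0" "\<forall>e\<in>insert e0 A. c e \<noteq> 0"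
        using circuit_coeffs[OF circ[OF AP e0A]] by blast
      have eA: "e \<in> A" using A fA AP by blast
      have fin: "finite (insert e0 A)" using finA[OF AP] by simp
      define T where "T = insert e0 A - {e}"
      have Tsp: "\<forall>g\<in>T. R g \<in> FV.span (R ` S)"
      proof
        fix g assume g: "g \<in> T"
        show "R g \<in> FV.span (R ` S)"
        proof (cases "g = e0")
          case True then show ?thesis using e0S by simp
        next
          case False
          then have "g \<in> A - {fA A}" using g A unfolding T_def by blast
          then show ?thesis using AS[OF A(1)] by (intro FV.span_base) auto
        qed
      qed
      have L: "(\<lambda>x. \<Sum>g\<in>T. c g * R g x) \<in> FV.span (R ` S)"
        using span_sub_span[OF Tsp lc_in_span] .
      have ce: "c e \<noteq> 0" using c(2) eA by blast
      have "R e = (\<lambda>x. (- 1 / c e) * (\<lambda>x. \<Sum>g\<in>T. c g * R g x) x)"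
      proof
        fix x
        have "(\<Sum>g\<in>insert e0 A. c g * R g x) = c e * R e x + (\<Sum>g\<in>T. c g * R g x)"
          unfolding T_def by (rule sum.remove[OF fin]) (simp add: eA)
        then show "R e x = (- 1 / c e) * (\<lambda>x. \<Sum>g\<in>T. c g * R g x) x"
          using spec[OF c(1), of x] ce by (simp add: field_simps)
      qed
      then show ?thesis using FV.span_scale[OF L, of "- 1 / c e"] by simp
    qed
  qed
  have up: "rig_rank d p D \<le> card S" using rank_le_span[OF finD finS allD] .
  have indS: "rig_indep d p S" unfolding rig_indep_def
  proof (intro conjI allI impI ballI)
    show "finite S" by fact
    fix b e assume z: "\<forall>col. (\<Sum>e\<in>S. b e * R e col) = 0" and e: "e \<in> S"
    have zQ: "\<forall>g\<in>S \<inter> A. b g = 0" if A: "A \<in> Q'" for A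
    proof -
      have AP: "A \<in> P" using A QP by blast
      have e0A: "e0 \<notin> A" using Q A unfolding Q'_def by blast
      obtain l where l: "\<forall>col. (\<Sum>e\<in>S \<inter> A. b e * R e col) = l * R e0 col"
        using split[OF finS _ z AP] unfolding S_def by blast
      have l0: "l = 0"
      proof (rule ccontr)
        assume ln: "l \<noteq> 0"
        let ?c = "\<lambda>g. if g = e0 then - l else b g"
        have fAe0: "fA A \<noteq> e0"
        proof
          assume "fA A = e0" then show False using fA[OF AP] e0A by simp
        qed
        have sub: "insert e0 (A - {fA A}) \<subset> insert e0 A"
        proof
          show "insert e0 (A - {fA A}) \<subseteq> insert e0 A" by blast
          have "fA A \<notin> insert e0 (A - {fA A})" using fAe0 by simp
          moreover have "fA A \<in> insert e0 A" using fA[OF AP] by simp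
          ultimately show "insert e0 (A - {fA A}) \<noteq> insert e0 A" by metis
        qed
        then have ind: "rig_indep d p (insert e0 (A - {fA A}))"
          using circ[OF AP e0A] unfolding rig_circuit_def by blast
        have zz: "(\<Sum>g\<in>insert e0 (A - {fA A}). ?c g * R g col) = 0" for col
        proof -
          have "(\<Sum>g\<in>insert e0 (A - {fA A}). ?c g * R g col) = - l * R e0 col + (\<Sum>g\<in>A - {fA A}. ?c g * R g col)"
            using finA[OF AP] e0A by simp
          also have "(\<Sum>g\<in>A - {fA A}. ?c g * R g col) = (\<Sum>g\<in>S \<inter> A. b g * R g col)"
            unfolding SA[OF A] using e0A by (intro sum.cong) auto
          finally show ?thesis using spec[OF l, of col] by simp
        qed
        have "?c e0 = 0" using rig_indepD[OF ind zz] by blast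
        then show False using ln by simp
      qed
      have "(\<Sum>e\<in>S \<inter> A. b e * R e col) = 0" for col using spec[OF l, of col] l0 by simp
      moreover have "rig_indep d p (S \<inter> A)" using indep_subset[OF indepP[OF AP]] by blast
      ultimately show ?thesis using rig_indepD by blast
    qed
    have zS: "\<forall>g\<in>S - A1. b g = 0"
    proof
      fix g assume g: "g \<in> S - A1"
      then obtain A where A: "A \<in> P" "g \<in> A" using PU unfolding S_def by blast
      then have "A \<in> Q'" using g unfolding Q'_def by blast
      then show "b g = 0" using zQ A g by blast
    qed
    have z1: "(\<Sum>g\<in>A1. b g * R g col) = 0" for col
    proof -
      have "(\<Sum>g\<in>S. b g * R g col) = (\<Sum>g\<in>S \<inter> A1. b g * R g col) + (\<Sum>g\<in>S - A1. b g * R g col)"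
        using finS by (rule sum.Int_Diff)
      moreover have "(\<Sum>g\<in>S - A1. b g * R g col) = 0" using zS by simp
      moreover have "S \<inter> A1 = A1" using A1S by blast
      ultimately show ?thesis using spec[OF z, of col] by simp
    qed
    have "\<forall>g\<in>A1. b g = 0" using rig_indepD[OF indepP[OF A1] z1] by blast
    then show "b e = 0" using zS e by blast
  qed
  have "card S \<le> rig_rank d p D" using rank_facts(2)[OF finD _ indS] unfolding S_def by blast
  then show ?thesis using up cS cQD unfolding Q'_def by linarith
qed

end


context S3 begin

lemma construct:
  assumes xs: "distinct xs" "set xs \<subseteq> P" "xs \<noteq> []" "\<forall>A\<in>set xs. e0 \<notin> A"
    and cover: "\<forall>x\<in>V. x = u \<or> x = v \<or> (\<exists>A\<in>set xs. \<exists>e\<in>A. x \<in> e) \<or> (\<forall>e\<in>D. x \<notin> e)"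
  shows "parallel_connection
     (map (\<lambda>A. ({u,v} \<union> \<Union>A \<union> (if A = hd xs then V - \<Union>D else {}), insert e0 A)) xs) u v V
     (\<Union>A\<in>set xs. insert e0 A)"
proof -
  define W where "W = (\<lambda>A::'v set set. {u,v} \<union> \<Union>A \<union> (if A = hd xs then V - \<Union>D else {}))"
  have WV: "W A \<subseteq> V" if AP: "A \<in> P" for A
  proof -
    have "\<Union>A \<subseteq> V" using edgeV PsubD[OF AP] by blast
    then show ?thesis unfolding W_def using uV vV by auto
  qed
  have gr: "is_graph (W A) (insert e0 A)" if A: "A \<in> set xs" for A
  proof -
    have AP: "A \<in> P" using A xs(2) by blast
    have "finite (W A)" using WV[OF AP] finV finite_subset by blast
    moreover have "\<exists>a b. a \<noteq> b \<and> a \<in> W A \<and> b \<in> W A \<and> e = {a, b}" if e: "e \<in> insert e0 A" for e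
    proof (cases "e = e0")
      case True then show ?thesis using uv unfolding W_def by blast
    next
      case False
      then have eA: "e \<in> A" using e by blast
      then have "e \<in> D" using PsubD[OF AP] by blast
      then obtain a b where ab: "a \<noteq> b" "e = {a,b}" using G unfolding is_graph_def by blast
      then have "a \<in> W A" "b \<in> W A" using eA unfolding W_def by blast+
      then show ?thesis using ab by blast
    qed
    ultimately show ?thesis unfolding is_graph_def by blast
  qed
  have inter: "W A \<inter> W B = {u,v}" if A: "A \<in> set xs" and B: "B \<in> set xs" and AB: "A \<noteq> B" for A B
  proof
    show "{u,v} \<subseteq> W A \<inter> W B" unfolding W_def by blast
    show "W A \<inter> W B \<subseteq> {u,v}"
    proof
      fix x assume x: "x \<in> W A \<inter> W B"
      show "x \<in> {u,v}"
      proof (rule ccontr)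
        assume nx: "x \<notin> {u,v}"
        have AP: "A \<in> P" and BP: "B \<in> P" using A B xs(2) by blast+
        have xA: "x \<in> \<Union>A \<or> (A = hd xs \<and> x \<notin> \<Union>D)" using x nx unfolding W_def by (auto split: if_splits)
        have xB: "x \<in> \<Union>B \<or> (B = hd xs \<and> x \<notin> \<Union>D)" using x nx unfolding W_def by (auto split: if_splits)
        have UA: "\<Union>A \<subseteq> \<Union>D" "\<Union>B \<subseteq> \<Union>D" using PsubD[OF AP] PsubD[OF BP] by blast+
        have "x \<in> \<Union>A \<and> x \<in> \<Union>B" using xA xB UA AB by blast
        then obtain e f where ef: "e \<in> A" "x \<in> e" "f \<in> B" "x \<in> f" by blast
        have "f \<in> D" "f \<notin> A" using ef PsubD[OF BP] Pdisj[OF AP BP AB] by blast+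
        then have "x = u \<or> x = v" using sep[OF AP ef(1) _ _ ef(2)] ef(4) by blast
        then show False using nx by blast
      qed
    qed
  qed
  have einter: "insert e0 A \<inter> insert e0 B = {e0}" if A: "A \<in> set xs" and B: "B \<in> set xs" and AB: "A \<noteq> B" for A B
  proof -
    have "A \<inter> B = {}" using Pdisj A B AB xs(2) by blast
    then show ?thesis by blast
  qed
  have cov: "V = (\<Union>A\<in>set xs. W A)"
  proof
    show "(\<Union>A\<in>set xs. W A) \<subseteq> V" using WV xs(2) by blast
    show "V \<subseteq> (\<Union>A\<in>set xs. W A)"
    proof
      fix x assume x: "x \<in> V"
      have h: "hd xs \<in> set xs" using xs(3) by simp
      show "x \<in> (\<Union>A\<in>set xs. W A)"
      proof (cases "x = u \<or> x = v")
        case True then show ?thesis using h unfolding W_def by blast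
      next
        case False
        then have "(\<exists>A\<in>set xs. \<exists>e\<in>A. x \<in> e) \<or> (\<forall>e\<in>D. x \<notin> e)" using cover x by blast
        then show ?thesis
        proof
          assume "\<exists>A\<in>set xs. \<exists>e\<in>A. x \<in> e"
          then show ?thesis unfolding W_def by blast
        next
          assume "\<forall>e\<in>D. x \<notin> e"
          then have "x \<in> W (hd xs)" using x unfolding W_def by auto
          then show ?thesis using h by blast
        qed
      qed
    qed
  qed
  have eq: "(\<lambda>A. ({u,v} \<union> \<Union>A \<union> (if A = hd xs then V - \<Union>D else {}), insert e0 A)) = (\<lambda>A. (W A, insert e0 A))"
    unfolding W_def by simp
  show ?thesis
    unfolding parallel_connection_def eq
  proof (intro conjI)
    show "\<forall>H\<in>set (map (\<lambda>A. (W A, insert e0 A)) xs). is_graph (fst H) (snd H) \<and> e0 \<in> snd H"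
      using gr by auto
    show "\<forall>i<length (map (\<lambda>A. (W A, insert e0 A)) xs). \<forall>j<length (map (\<lambda>A. (W A, insert e0 A)) xs). i \<noteq> j \<longrightarrow>
       fst (map (\<lambda>A. (W A, insert e0 A)) xs ! i) \<inter> fst (map (\<lambda>A. (W A, insert e0 A)) xs ! j) = {u, v} \<and>
       snd (map (\<lambda>A. (W A, insert e0 A)) xs ! i) \<inter> snd (map (\<lambda>A. (W A, insert e0 A)) xs ! j) = {e0}"
    proof (intro allI impI)
      fix i j assume i: "i < length (map (\<lambda>A. (W A, insert e0 A)) xs)" and j: "j < length (map (\<lambda>A. (W A, insert e0 A)) xs)" and ij: "i \<noteq> j"
      have i': "i < length xs" and j': "j < length xs" using i j by auto
      have ne: "xs ! i \<noteq> xs ! j" using nth_eq_iff_index_eq[OF xs(1) i' j'] ij by blast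
      have s: "xs ! i \<in> set xs" "xs ! j \<in> set xs" using i' j' by auto
      show "fst (map (\<lambda>A. (W A, insert e0 A)) xs ! i) \<inter> fst (map (\<lambda>A. (W A, insert e0 A)) xs ! j) = {u, v} \<and>
       snd (map (\<lambda>A. (W A, insert e0 A)) xs ! i) \<inter> snd (map (\<lambda>A. (W A, insert e0 A)) xs ! j) = {e0}"
        using inter[OF s ne] einter[OF s ne] i' j' by simp
    qed
    show "V = \<Union> (fst ` set (map (\<lambda>A. (W A, insert e0 A)) xs))" using cov by simp
    show "(\<Union>A\<in>set xs. insert e0 A) = \<Union> (snd ` set (map (\<lambda>A. (W A, insert e0 A)) xs))" by simp
  qed
qed

end


theorem proposition3p11:
  fixes d k :: nat and V :: "'v set" and D :: "'v set set"
    and p :: "'v \<Rightarrow> nat \<Rightarrow> real" and P :: "'v set set set" and u v :: 'v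
  assumes "d \<ge> 1" and "k \<ge> 2"
    and "is_graph V D"
    and "generic d V p"
    and "rig_connected d p D"
    and "kfold_circuit d p k D"
    and "principal_partition d p k D P"
    and "u \<noteq> v"
    and "{w \<in> V. technicolour P w} = {u, v}"
  shows "({u, v} \<in> D \<longrightarrow>
            (\<exists>Hs. length Hs = k \<and> (\<forall>H\<in>set Hs. rig_circuit d p (snd H)) \<and>
                  parallel_connection Hs u v V D))
       \<and> ({u, v} \<notin> D \<longrightarrow>
            (\<exists>Hs EE. length Hs = k + 1 \<and> (\<forall>H\<in>set Hs. rig_circuit d p (snd H)) \<and>
                  parallel_connection Hs u v V EE \<and> D = EE - {{u, v}}))"
proof -
  interpret S3 d k V D p P u v
    using assms by (intro S3.intro) auto
  define mk where "mk = (\<lambda>xs. map (\<lambda>A. ({u,v} \<union> \<Union>A \<union> (if A = hd xs then V - \<Union>D else {}), insert {u,v} A)) xs)"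
  have circs: "\<forall>H\<in>set (mk xs). rig_circuit d p (snd H)" if "set xs \<subseteq> P" "\<forall>A\<in>set xs. {u,v} \<notin> A" for xs
    using circ that unfolding mk_def by auto
  show ?thesis
  proof (intro conjI impI)
    assume e0D: "{u,v} \<in> D"
    obtain A1 where A1: "A1 \<in> P" "{u,v} \<in> A1" using PU e0D by blast
    have A1e: "A1 = {{u,v}}" using e0part[OF A1] .
    define Q where "Q = P - {A1}"
    have Qe: "\<forall>A\<in>Q. {u,v} \<notin> A"
    proof
      fix A assume A: "A \<in> Q"
      show "{u,v} \<notin> A"
      proof
        assume "{u,v} \<in> A"
        then have "A = {{u,v}}" using e0part A unfolding Q_def by blast
        then show False using A A1e unfolding Q_def by blast
      qed
    qed
    have ck: "card Q = k" using count[OF A1(1)] Qe kD unfolding Q_def by simp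
    have finQ: "finite Q" unfolding Q_def using finP by simp
    obtain xs where xs: "set xs = Q" "distinct xs" using finite_distinct_list[OF finQ] by blast
    have lx: "length xs = k" using distinct_card[OF xs(2)] xs(1) ck by simp
    have xne: "xs \<noteq> []" using lx k2 by auto
    have QP: "Q \<subseteq> P" unfolding Q_def by blast
    have cover: "\<forall>x\<in>V. x = u \<or> x = v \<or> (\<exists>A\<in>set xs. \<exists>e\<in>A. x \<in> e) \<or> (\<forall>e\<in>D. x \<notin> e)"
    proof
      fix x assume x: "x \<in> V"
      show "x = u \<or> x = v \<or> (\<exists>A\<in>set xs. \<exists>e\<in>A. x \<in> e) \<or> (\<forall>e\<in>D. x \<notin> e)"
      proof (cases "\<exists>e\<in>D. x \<in> e")
        case True
        then obtain e A where e: "e \<in> A" "A \<in> P" "x \<in> e" using PU by blast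
        show ?thesis
        proof (cases "A = A1")
          case True then show ?thesis using e A1e by auto
        next
          case False then show ?thesis using e xs(1) unfolding Q_def by blast
        qed
      qed blast
    qed
    have pc: "parallel_connection (mk xs) u v V (\<Union>A\<in>set xs. insert {u,v} A)"
      unfolding mk_def using construct[OF xs(2) _ xne _ cover] xs(1) QP Qe by blast
    have UD: "(\<Union>A\<in>set xs. insert {u,v} A) = D"
    proof
      show "(\<Union>A\<in>set xs. insert {u,v} A) \<subseteq> D" using xs(1) QP PsubD e0D by blast
      show "D \<subseteq> (\<Union>A\<in>set xs. insert {u,v} A)"
      proof
        fix e assume e: "e \<in> D"
        then obtain A where A: "A \<in> P" "e \<in> A" using PU by blast
        show "e \<in> (\<Union>A\<in>set xs. insert {u,v} A)"
        proof (cases "A = A1")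
          case True
          then have "e = {u,v}" using A A1e by simp
          moreover obtain B where "B \<in> set xs" using xne by (cases xs) auto
          ultimately show ?thesis by blast
        next
          case False then show ?thesis using A xs(1) unfolding Q_def by blast
        qed
      qed
    qed
    show "\<exists>Hs. length Hs = k \<and> (\<forall>H\<in>set Hs. rig_circuit d p (snd H)) \<and> parallel_connection Hs u v V D"
    proof (intro exI conjI)
      show "length (mk xs) = k" unfolding mk_def using lx by simp
      show "\<forall>H\<in>set (mk xs). rig_circuit d p (snd H)" using circs xs(1) QP Qe by blast
      show "parallel_connection (mk xs) u v V D" using pc UD by simp
    qed
  next
    assume e0D: "{u,v} \<notin> D"
    obtain A1 where A1: "A1 \<in> P"
      using tech unfolding technicolour_def by blast
    have Pe: "\<forall>A\<in>P. {u,v} \<notin> A" using e0D PsubD by blast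
    have ck: "card (P - {A1}) = k" using count[OF A1] Pe kD by simp
    have cP: "card P = k + 1" using ck card_Diff_singleton[OF A1] finP A1
      by (metis One_nat_def Suc_pred add.commute card_gt_0_iff empty_iff plus_1_eq_Suc)
    obtain xs where xs: "set xs = P" "distinct xs" using finite_distinct_list[OF finP] by blast
    have lx: "length xs = k + 1" using distinct_card[OF xs(2)] xs(1) cP by simp
    have xne: "xs \<noteq> []" using lx by auto
    have cover: "\<forall>x\<in>V. x = u \<or> x = v \<or> (\<exists>A\<in>set xs. \<exists>e\<in>A. x \<in> e) \<or> (\<forall>e\<in>D. x \<notin> e)"
      using PU xs(1) by blast
    have pc: "parallel_connection (mk xs) u v V (\<Union>A\<in>set xs. insert {u,v} A)"
      unfolding mk_def using construct[OF xs(2) _ xne _ cover] xs(1) Pe by blast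
    have DE: "D = (\<Union>A\<in>set xs. insert {u,v} A) - {{u,v}}"
      using PU xs(1) e0D A1 by blast
    show "\<exists>Hs EE. length Hs = k + 1 \<and> (\<forall>H\<in>set Hs. rig_circuit d p (snd H)) \<and>
                  parallel_connection Hs u v V EE \<and> D = EE - {{u, v}}"
    proof (intro exI conjI)
      show "length (mk xs) = k + 1" unfolding mk_def using lx by simp
      show "\<forall>H\<in>set (mk xs). rig_circuit d p (snd H)" using circs xs(1) Pe by blast
      show "parallel_connection (mk xs) u v V (\<Union>A\<in>set xs. insert {u,v} A)" by (rule pc)
      show "D = (\<Union>A\<in>set xs. insert {u,v} A) - {{u,v}}" by (rule DE)
    qed
  qed
qed

end
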